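(* Let $\mathfrak{M}$ be a variety of associative rings such that for all finite rings $R,S\in\mathfrak{M}$, $\Gamma(R)\cong\Gamma(S)$ implies $R\cong S$. Then there exist $m\in\mathbb{N}$, $g(x)\in\mathbb{Z}[x]$ and an integer $d$ such that $mx\in T(\mathfrak{M})$ and $dx+x^2g(x)\in T(\mathfrak{M})$, where either $d=1$ or $d=q_1q_2\cdots q_l$ with $q_1,\ldots,q_l$ pairwise distinct prime divisors of $m$.
   Context: All rings are associative, not necessarily commutative and not necessarily with identity. For a ring $R$, the zero-divisor graph $\Gamma(R)$ is the graph whose vertices are all nonzero (one-sided or two-sided) zero-divisors of $R$, two distinct vertices $x,y$ being adjacent iff $xy=0$ or $yx=0$. For a variety $\mathfrak{M}$, $T(\mathfrak{M})$ denotes the T-ideal (in the free associative ring $\mathbb{Z}\langle x_1,x_2,\ldots\rangle$) of all polynomial identities satisfied by all rings of $\mathfrak{M}$. *)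

theory Defs
  imports "HOL-Algebra.Ring" "HOL-Computational_Algebra.Polynomial"
begin

text \<open>We use the HOL-Algebra ring record but ignore its one field: an associative ring
  (not necessarily unital, not necessarily commutative) is an abelian additive group whose
  multiplication is closed, associative and distributive on both sides.\<close>

definition assoc_ring :: "('a, 'b) ring_scheme \<Rightarrow> bool" where
  "assoc_ring R \<longleftrightarrow> abelian_group R
     \<and> (\<forall>x\<in>carrier R. \<forall>y\<in>carrier R. x \<otimes>\<^bsub>R\<^esub> y \<in> carrier R)
     \<and> (\<forall>x\<in>carrier R. \<forall>y\<in>carrier R. \<forall>z\<in>carrier R.
          (x \<otimes>\<^bsub>R\<^esub> y) \<otimes>\<^bsub>R\<^esub> z = x \<otimes>\<^bsub>R\<^esub> (y \<otimes>\<^bsub>R\<^esub> z))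
     \<and> (\<forall>x\<in>carrier R. \<forall>y\<in>carrier R. \<forall>z\<in>carrier R.
          x \<otimes>\<^bsub>R\<^esub> (y \<oplus>\<^bsub>R\<^esub> z) = x \<otimes>\<^bsub>R\<^esub> y \<oplus>\<^bsub>R\<^esub> x \<otimes>\<^bsub>R\<^esub> z
        \<and> (y \<oplus>\<^bsub>R\<^esub> z) \<otimes>\<^bsub>R\<^esub> x = y \<otimes>\<^bsub>R\<^esub> x \<oplus>\<^bsub>R\<^esub> z \<otimes>\<^bsub>R\<^esub> x)"

definition rng_isomorphic :: "('a, 'b) ring_scheme \<Rightarrow> ('c, 'd) ring_scheme \<Rightarrow> bool" where
  "rng_isomorphic R S \<longleftrightarrow> (\<exists>h. bij_betw h (carrier R) (carrier S)
     \<and> (\<forall>x\<in>carrier R. \<forall>y\<in>carrier R.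
          h (x \<oplus>\<^bsub>R\<^esub> y) = h x \<oplus>\<^bsub>S\<^esub> h y \<and> h (x \<otimes>\<^bsub>R\<^esub> y) = h x \<otimes>\<^bsub>S\<^esub> h y))"

definition zd_vertices :: "('a, 'b) ring_scheme \<Rightarrow> 'a set" where
  "zd_vertices R = {x \<in> carrier R. x \<noteq> \<zero>\<^bsub>R\<^esub> \<and>
     (\<exists>y\<in>carrier R. y \<noteq> \<zero>\<^bsub>R\<^esub> \<and> (x \<otimes>\<^bsub>R\<^esub> y = \<zero>\<^bsub>R\<^esub> \<or> y \<otimes>\<^bsub>R\<^esub> x = \<zero>\<^bsub>R\<^esub>))}"

definition zd_adj :: "('a, 'b) ring_scheme \<Rightarrow> 'a \<Rightarrow> 'a \<Rightarrow> bool" where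
  "zd_adj R x y \<longleftrightarrow> x \<in> zd_vertices R \<and> y \<in> zd_vertices R \<and> x \<noteq> y
     \<and> (x \<otimes>\<^bsub>R\<^esub> y = \<zero>\<^bsub>R\<^esub> \<or> y \<otimes>\<^bsub>R\<^esub> x = \<zero>\<^bsub>R\<^esub>)"

definition zd_graph_isomorphic :: "('a, 'b) ring_scheme \<Rightarrow> ('c, 'd) ring_scheme \<Rightarrow> bool" where
  "zd_graph_isomorphic R S \<longleftrightarrow> (\<exists>f. bij_betw f (zd_vertices R) (zd_vertices S)
     \<and> (\<forall>x\<in>zd_vertices R. \<forall>y\<in>zd_vertices R. zd_adj R x y \<longleftrightarrow> zd_adj S (f x) (f y)))"

datatype ncpoly = Var nat | Zero | Add ncpoly ncpoly | Neg ncpoly | Mul ncpoly ncpoly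

fun eval :: "('a, 'b) ring_scheme \<Rightarrow> (nat \<Rightarrow> 'a) \<Rightarrow> ncpoly \<Rightarrow> 'a" where
  "eval R \<sigma> (Var i) = \<sigma> i"
| "eval R \<sigma> Zero = \<zero>\<^bsub>R\<^esub>"
| "eval R \<sigma> (Add p q) = eval R \<sigma> p \<oplus>\<^bsub>R\<^esub> eval R \<sigma> q"
| "eval R \<sigma> (Neg p) = \<ominus>\<^bsub>R\<^esub> eval R \<sigma> p"
| "eval R \<sigma> (Mul p q) = eval R \<sigma> p \<otimes>\<^bsub>R\<^esub> eval R \<sigma> q"

definition holds :: "('a, 'b) ring_scheme \<Rightarrow> ncpoly \<Rightarrow> bool" where
  "holds R p \<longleftrightarrow> (\<forall>\<sigma>. (\<forall>i. \<sigma> i \<in> carrier R) \<longrightarrow> eval R \<sigma> p = \<zero>\<^bsub>R\<^esub>)"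

definition in_variety :: "ncpoly set \<Rightarrow> ('a, 'b) ring_scheme \<Rightarrow> bool" where
  "in_variety \<Sigma> R \<longleftrightarrow> assoc_ring R \<and> (\<forall>p\<in>\<Sigma>. holds R p)"

text \<open>It suffices to
  range over rings whose carrier lies in a fixed countably infinite type (nat): an identity
  failing in some member fails in a finitely generated (hence countable) subring, which is in
  the variety and is isomorphic to a ring carried by a subset of nat.\<close>

definition T_ideal :: "ncpoly set \<Rightarrow> ncpoly set" where
  "T_ideal \<Sigma> = {p. \<forall>R :: nat ring. in_variety \<Sigma> R \<longrightarrow> holds R p}"

fun natmul :: "nat \<Rightarrow> ncpoly \<Rightarrow> ncpoly" where
  "natmul 0 t = Zero"
| "natmul (Suc n) t = Add t (natmul n t)"

definition intmul :: "int \<Rightarrow> ncpoly \<Rightarrow> ncpoly" where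
  "intmul n t = (if n \<ge> 0 then natmul (nat n) t else Neg (natmul (nat (- n)) t))"

text \<open>pw t k = t^(k+1)\<close>

fun pw :: "ncpoly \<Rightarrow> nat \<Rightarrow> ncpoly" where
  "pw t 0 = t"
| "pw t (Suc k) = Mul t (pw t k)"

fun sumt :: "ncpoly list \<Rightarrow> ncpoly" where
  "sumt [] = Zero"
| "sumt (a # l) = Add a (sumt l)"

abbreviation X :: ncpoly where "X \<equiv> Var 0"

text \<open>x^2 g(x) = sum_i g_i x^(i+2)\<close>

definition x2_times :: "int poly \<Rightarrow> ncpoly" where
  "x2_times g = sumt (map (\<lambda>i. intmul (coeff g i) (pw X (Suc i))) [0..<Suc (degree g)])"

end

theory Submission
  imports Defs "HOL-Computational_Algebra.Squarefree"
begin

locale arng = abelian_group R for R :: "('a,'b) ring_scheme" (structure) +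
  assumes mc: "x \<in> carrier R \<Longrightarrow> y \<in> carrier R \<Longrightarrow> x \<otimes> y \<in> carrier R"
  and mass: "x \<in> carrier R \<Longrightarrow> y \<in> carrier R \<Longrightarrow> z \<in> carrier R \<Longrightarrow> (x \<otimes> y) \<otimes> z = x \<otimes> (y \<otimes> z)"
  and ldist: "x \<in> carrier R \<Longrightarrow> y \<in> carrier R \<Longrightarrow> z \<in> carrier R \<Longrightarrow> x \<otimes> (y \<oplus> z) = x \<otimes> y \<oplus> x \<otimes> z"
  and rdist: "x \<in> carrier R \<Longrightarrow> y \<in> carrier R \<Longrightarrow> z \<in> carrier R \<Longrightarrow> (y \<oplus> z) \<otimes> x = y \<otimes> x \<oplus> z \<otimes> x"

lemma arngI: "assoc_ring R \<Longrightarrow> arng R"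
  unfolding assoc_ring_def arng_def arng_axioms_def by blast

fun rsum :: "('a,'b) ring_scheme \<Rightarrow> (nat \<Rightarrow> 'a) \<Rightarrow> nat \<Rightarrow> 'a" where
  "rsum R t 0 = \<zero>\<^bsub>R\<^esub>"
| "rsum R t (Suc n) = rsum R t n \<oplus>\<^bsub>R\<^esub> t n"

fun rpw :: "('a,'b) ring_scheme \<Rightarrow> 'a \<Rightarrow> nat \<Rightarrow> 'a" where
  "rpw R a 0 = a"
| "rpw R a (Suc k) = a \<otimes>\<^bsub>R\<^esub> rpw R a k"

definition pe :: "('a,'b) ring_scheme \<Rightarrow> int poly \<Rightarrow> 'a \<Rightarrow> 'a" where
  "pe R f a = rsum R (\<lambda>i. [coeff f i] \<cdot>\<^bsub>R\<^esub> rpw R a i) (Suc (degree f))"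

context arng begin

lemma mult_zero_r: "x \<in> carrier R \<Longrightarrow> x \<otimes> \<zero> = \<zero>"
proof -
  assume x: "x \<in> carrier R"
  have "x \<otimes> \<zero> \<oplus> x \<otimes> \<zero> = x \<otimes> \<zero> \<oplus> \<zero>"
    using ldist[OF x zero_closed zero_closed] x mc by simp
  thus ?thesis using x mc add.l_cancel_one by (metis zero_closed r_zero)
qed

lemma mult_zero_l: "x \<in> carrier R \<Longrightarrow> \<zero> \<otimes> x = \<zero>"
proof -
  assume x: "x \<in> carrier R"
  have "\<zero> \<otimes> x \<oplus> \<zero> \<otimes> x = \<zero> \<otimes> x \<oplus> \<zero>"
    using rdist[OF x zero_closed zero_closed] x mc by simp
  thus ?thesis using x mc add.l_cancel_one by (metis zero_closed r_zero)
qed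

lemma mult_neg_r: "x \<in> carrier R \<Longrightarrow> y \<in> carrier R \<Longrightarrow> x \<otimes> (\<ominus> y) = \<ominus> (x \<otimes> y)"
proof -
  assume x: "x \<in> carrier R" and y: "y \<in> carrier R"
  have "x \<otimes> y \<oplus> x \<otimes> (\<ominus> y) = \<zero>"
    using ldist[OF x y a_inv_closed[OF y]] r_neg[OF y] mult_zero_r[OF x] by simp
  thus ?thesis using x y mc a_inv_closed add.inv_equality a_comm by (metis)
qed

lemma mult_neg_l: "x \<in> carrier R \<Longrightarrow> y \<in> carrier R \<Longrightarrow> (\<ominus> y) \<otimes> x = \<ominus> (y \<otimes> x)"
proof -
  assume x: "x \<in> carrier R" and y: "y \<in> carrier R"
  have "y \<otimes> x \<oplus> (\<ominus> y) \<otimes> x = \<zero>"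
    using rdist[OF x y a_inv_closed[OF y]] r_neg[OF y] mult_zero_l[OF x] by simp
  thus ?thesis using x y mc a_inv_closed add.inv_equality a_comm by (metis)
qed

lemma natmul_l: "x \<in> carrier R \<Longrightarrow> y \<in> carrier R \<Longrightarrow> ([(n::nat)] \<cdot> x) \<otimes> y = [n] \<cdot> (x \<otimes> y)"
  by (induction n) (auto simp: mult_zero_l rdist mc)

lemma natmul_r: "x \<in> carrier R \<Longrightarrow> y \<in> carrier R \<Longrightarrow> y \<otimes> ([(n::nat)] \<cdot> x) = [n] \<cdot> (y \<otimes> x)"
  by (induction n) (auto simp: mult_zero_r ldist mc)

lemma zmul_l: "x \<in> carrier R \<Longrightarrow> y \<in> carrier R \<Longrightarrow> ([(k::int)] \<cdot> x) \<otimes> y = [k] \<cdot> (x \<otimes> y)"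
  by (cases "k \<ge> 0") (auto simp: add_pow_int_ge add_pow_int_lt natmul_l mult_neg_l mc)

lemma zmul_r: "x \<in> carrier R \<Longrightarrow> y \<in> carrier R \<Longrightarrow> y \<otimes> ([(k::int)] \<cdot> x) = [k] \<cdot> (y \<otimes> x)"
  by (cases "k \<ge> 0") (auto simp: add_pow_int_ge add_pow_int_lt natmul_r mult_neg_r mc)

lemma rsum_zero [simp]: "rsum R (\<lambda>i. \<zero>) n = \<zero>"
  by (induction n) auto

lemma rsum_closed: "(\<And>i. i < n \<Longrightarrow> t i \<in> carrier R) \<Longrightarrow> rsum R t n \<in> carrier R"
  by (induction n) auto

lemma rsum_add: "(\<And>i. i < n \<Longrightarrow> s i \<in> carrier R) \<Longrightarrow> (\<And>i. i < n \<Longrightarrow> t i \<in> carrier R) \<Longrightarrow>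
   rsum R (\<lambda>i. s i \<oplus> t i) n = rsum R s n \<oplus> rsum R t n"
proof (induction n)
  case 0 then show ?case by simp
next
  case (Suc n)
  have c: "rsum R s n \<in> carrier R" "rsum R t n \<in> carrier R" "s n \<in> carrier R" "t n \<in> carrier R"
    using Suc.prems by (auto intro!: rsum_closed)
  show ?case using Suc c by (simp add: a_ac)
qed

lemma rsum_cong: "(\<And>i. i < n \<Longrightarrow> s i = t i) \<Longrightarrow> rsum R s n = rsum R t n"
  by (induction n) auto

lemma rsum_zmul: "(\<And>i. i < n \<Longrightarrow> t i \<in> carrier R) \<Longrightarrow>
   rsum R (\<lambda>i. [(k::int)] \<cdot> t i) n = [k] \<cdot> rsum R t n"
  by (induction n) (auto simp: add.int_pow_distrib rsum_closed)

lemma rsum_lmult: "a \<in> carrier R \<Longrightarrow> (\<And>i. i < n \<Longrightarrow> t i \<in> carrier R) \<Longrightarrow>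
   a \<otimes> rsum R t n = rsum R (\<lambda>i. a \<otimes> t i) n"
  by (induction n) (auto simp: mult_zero_r ldist rsum_closed)

lemma rsum_ext: "(\<And>i. i \<ge> n \<Longrightarrow> t i = \<zero>) \<Longrightarrow> (\<And>i. i < n \<Longrightarrow> t i \<in> carrier R) \<Longrightarrow> n \<le> N \<Longrightarrow> rsum R t N = rsum R t n"
proof (induction N)
  case 0 then show ?case by simp
next
  case (Suc N)
  show ?case
  proof (cases "n = Suc N")
    case False
    then have "n \<le> N" using Suc by simp
    have "rsum R t n \<in> carrier R" using Suc.prems(2) by (rule rsum_closed)
    then show ?thesis using Suc.IH[OF Suc.prems(1,2) \<open>n \<le> N\<close>] Suc.prems(1)[of N] \<open>n \<le> N\<close> by simp
  qed simp
qed

lemma rsum_shift: "(\<And>i. i < Suc n \<Longrightarrow> t i \<in> carrier R) \<Longrightarrow> rsum R t (Suc n) = t 0 \<oplus> rsum R (\<lambda>i. t (Suc i)) n"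
proof (induction n)
  case 0 then show ?case by auto
next
  case (Suc n)
  have c: "t 0 \<in> carrier R" "rsum R (\<lambda>i. t (Suc i)) n \<in> carrier R" "t (Suc n) \<in> carrier R"
    using Suc.prems by (auto intro!: rsum_closed)
  have "rsum R t (Suc (Suc n)) = rsum R t (Suc n) \<oplus> t (Suc n)" by simp
  also have "\<dots> = (t 0 \<oplus> rsum R (\<lambda>i. t (Suc i)) n) \<oplus> t (Suc n)" using Suc by simp
  finally show ?case using c by (simp add: a_ac)
qed

lemma rsum_delta: "j < n \<Longrightarrow> x \<in> carrier R \<Longrightarrow> rsum R (\<lambda>i. if i = j then x else \<zero>) n = x"
proof (induction n)
  case 0 then show ?case by simp
next
  case (Suc n)
  show ?case
  proof (cases "j = n")
    case True
    have "rsum R (\<lambda>i. if i = j then x else \<zero>) n = rsum R (\<lambda>i. \<zero>) n"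
      by (rule rsum_cong) (use True in auto)
    also have "\<dots> = \<zero>" by (induction n) auto
    finally show ?thesis using True Suc by simp
  next
    case False
    then show ?thesis using Suc by simp
  qed
qed

lemma rpw_closed: "a \<in> carrier R \<Longrightarrow> rpw R a k \<in> carrier R"
  by (induction k) (auto simp: mc)

lemma rpw_zmul: "a \<in> carrier R \<Longrightarrow> rpw R ([(t::int)] \<cdot> a) k = [(t ^ Suc k)] \<cdot> rpw R a k"
proof (induction k)
  case 0 then show ?case by simp
next
  case (Suc k)
  have "rpw R ([t] \<cdot> a) (Suc k) = ([t] \<cdot> a) \<otimes> ([(t ^ Suc k)] \<cdot> rpw R a k)" using Suc by simp
  also have "\<dots> = [t] \<cdot> ([(t ^ Suc k)] \<cdot> (a \<otimes> rpw R a k))"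
    using Suc.prems by (simp add: zmul_l zmul_r rpw_closed mc add.int_pow_pow mult.commute)
  also have "\<dots> = [(t ^ Suc (Suc k))] \<cdot> rpw R a (Suc k)"
    using Suc.prems by (simp add: add.int_pow_pow rpw_closed mc mult.commute)
  finally show ?case .
qed


lemma zmul0 [simp]: "[(0::int)] \<cdot> x = \<zero>"
  by (simp add: add_pow_def int_pow_def)

lemma pe_sum: assumes a: "a \<in> carrier R" and N: "\<And>i. i \<ge> N \<Longrightarrow> coeff f i = 0"
  shows "pe R f a = rsum R (\<lambda>i. [coeff f i] \<cdot> rpw R a i) N"
proof -
  let ?t = "\<lambda>i. [coeff f i] \<cdot> rpw R a i"
  let ?m = "min N (Suc (degree f))"
  have z: "?t i = \<zero>" if "i \<ge> ?m" for i
  proof -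
    have "coeff f i = 0" using that N coeff_eq_0[of f i] by (cases "i \<ge> N") auto
    then show ?thesis by simp
  qed
  have c: "?t i \<in> carrier R" for i using a rpw_closed by simp
  have "pe R f a = rsum R ?t ?m" unfolding pe_def by (rule rsum_ext) (use z c in auto)
  also have "\<dots> = rsum R ?t N" by (rule rsum_ext[symmetric]) (use z c in auto)
  finally show ?thesis .
qed

lemma pe_closed: "a \<in> carrier R \<Longrightarrow> pe R f a \<in> carrier R"
  unfolding pe_def by (rule rsum_closed) (simp add: rpw_closed)

lemma pe_add: fixes f g :: "int poly" assumes a: "a \<in> carrier R" shows "pe R (f + g) a = pe R f a \<oplus> pe R g a"
proof -
  let ?N = "Suc (degree f + degree g)"
  have dg: "degree (f+g) \<le> degree f + degree g" by (rule degree_add_le) auto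
  have N: "\<And>h i. h \<in> {f, g, f + g} \<Longrightarrow> i \<ge> ?N \<Longrightarrow> coeff h i = 0"
    using dg by (auto intro!: coeff_eq_0)
  have "pe R (f + g) a = rsum R (\<lambda>i. [coeff (f+g) i] \<cdot> rpw R a i) ?N" by (rule pe_sum[OF a]) (use N in blast)
  also have "\<dots> = rsum R (\<lambda>i. [coeff f i] \<cdot> rpw R a i \<oplus> [coeff g i] \<cdot> rpw R a i) ?N"
    by (rule rsum_cong) (simp add: add.int_pow_mult rpw_closed a)
  also have "\<dots> = rsum R (\<lambda>i. [coeff f i] \<cdot> rpw R a i) ?N \<oplus> rsum R (\<lambda>i. [coeff g i] \<cdot> rpw R a i) ?N"
    by (rule rsum_add) (simp_all add: rpw_closed a)
  also have "\<dots> = pe R f a \<oplus> pe R g a"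
    using pe_sum[OF a, of ?N f] pe_sum[OF a, of ?N g] N by simp
  finally show ?thesis .
qed

lemma pe_smult: assumes a: "a \<in> carrier R" shows "pe R (smult c f) a = [c] \<cdot> pe R f a"
proof -
  let ?N = "Suc (degree f)"
  have N: "\<And>h i. h \<in> {f, smult c f} \<Longrightarrow> i \<ge> ?N \<Longrightarrow> coeff h i = 0"
    by (auto intro!: coeff_eq_0)
  have "pe R (smult c f) a = rsum R (\<lambda>i. [coeff (smult c f) i] \<cdot> rpw R a i) ?N" by (rule pe_sum[OF a]) (use N in blast)
  also have "\<dots> = rsum R (\<lambda>i. [c] \<cdot> ([coeff f i] \<cdot> rpw R a i)) ?N"
    by (rule rsum_cong) (simp add: add.int_pow_pow rpw_closed a mult.commute)
  also have "\<dots> = [c] \<cdot> pe R f a"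
    unfolding pe_def by (rule rsum_zmul) (simp_all add: rpw_closed a)
  finally show ?thesis .
qed

lemma pe_uminus: assumes a: "a \<in> carrier R" shows "pe R (- f) a = \<ominus> pe R f a"
proof -
  have "pe R (- f) a = pe R (smult (-1) f) a" by simp
  also have "\<dots> = [(-1::int)] \<cdot> pe R f a" by (rule pe_smult[OF a])
  also have "\<dots> = \<ominus> pe R f a" using add.int_pow_neg[of "pe R f a" 1] pe_closed[OF a] by simp
  finally show ?thesis .
qed

lemma pe_zero: "pe R 0 a = \<zero>"
  unfolding pe_def by simp

lemma pe_one: "a \<in> carrier R \<Longrightarrow> pe R 1 a = a"
  unfolding pe_def by simp

lemma pe_pCons: assumes a: "a \<in> carrier R" shows "pe R (pCons c g) a = [c] \<cdot> a \<oplus> a \<otimes> pe R g a"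
proof -
  let ?N = "Suc (degree g)"
  have N1: "\<And>i. i \<ge> Suc ?N \<Longrightarrow> coeff (pCons c g) i = 0"
    by (auto intro!: coeff_eq_0 simp: degree_pCons_le Suc_le_eq dest: le_less_trans[OF degree_pCons_le])
  have "pe R (pCons c g) a = rsum R (\<lambda>i. [coeff (pCons c g) i] \<cdot> rpw R a i) (Suc ?N)"
    by (rule pe_sum[OF a N1])
  also have "\<dots> = [c] \<cdot> a \<oplus> rsum R (\<lambda>i. [coeff g i] \<cdot> rpw R a (Suc i)) ?N"
    by (subst rsum_shift) (simp_all add: rpw_closed a)
  also have "rsum R (\<lambda>i. [coeff g i] \<cdot> rpw R a (Suc i)) ?N = rsum R (\<lambda>i. a \<otimes> ([coeff g i] \<cdot> rpw R a i)) ?N"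
    by (rule rsum_cong) (simp add: zmul_r rpw_closed a)
  also have "\<dots> = a \<otimes> pe R g a"
    unfolding pe_def by (rule rsum_lmult[symmetric]) (simp_all add: rpw_closed a)
  finally show ?thesis .
qed

lemma pe_mul: assumes a: "a \<in> carrier R" shows "pe R (pCons 0 (f * g)) a = pe R f a \<otimes> pe R g a"
proof (induction f rule: pCons_induct)
  case 0 then show ?case by (simp add: pe_zero mult_zero_l pe_closed a)
next
  case (pCons c f)
  have cl: "pe R f a \<in> carrier R" "pe R g a \<in> carrier R" "pe R (f*g) a \<in> carrier R" using pe_closed a by auto
  have "pe R (pCons 0 (pCons c f * g)) a = a \<otimes> pe R (smult c g + pCons 0 (f * g)) a"
    by (simp add: pe_pCons a mc pe_closed)
  also have "\<dots> = a \<otimes> ([c] \<cdot> pe R g a) \<oplus> a \<otimes> (pe R f a \<otimes> pe R g a)"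
    using pCons.IH by (simp add: pe_add pe_smult a ldist cl mc)
  also have "\<dots> = ([c] \<cdot> a \<oplus> a \<otimes> pe R f a) \<otimes> pe R g a"
    using cl a by (simp add: rdist mc zmul_l zmul_r mass)
  also have "\<dots> = pe R (pCons c f) a \<otimes> pe R g a" by (simp add: pe_pCons a)
  finally show ?case .
qed

end

definition scale :: "int \<Rightarrow> int poly \<Rightarrow> int poly" where
  "scale t f = Abs_poly (\<lambda>i. if i \<le> degree f then coeff f i * t ^ Suc i else 0)"

lemma coeff_scale: "coeff (scale t f) i = coeff f i * t ^ Suc i"
  unfolding scale_def coeff_Abs_poly_If_le by (auto simp: coeff_eq_0)

context arng begin

lemma pe_scale: assumes a: "a \<in> carrier R" shows "pe R (scale t f) a = pe R f ([t] \<cdot> a)"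
proof -
  let ?N = "Suc (degree f)"
  have N: "\<And>h i. h \<in> {f, scale t f} \<Longrightarrow> i \<ge> ?N \<Longrightarrow> coeff h i = 0"
    by (auto simp: coeff_scale coeff_eq_0)
  have ta: "[t] \<cdot> a \<in> carrier R" using a by simp
  have "pe R (scale t f) a = rsum R (\<lambda>i. [coeff (scale t f) i] \<cdot> rpw R a i) ?N" by (rule pe_sum[OF a]) (use N in blast)
  also have "\<dots> = rsum R (\<lambda>i. [coeff f i] \<cdot> rpw R ([t] \<cdot> a) i) ?N"
    by (rule rsum_cong) (simp add: coeff_scale rpw_zmul add.int_pow_pow rpw_closed a mult.commute)
  also have "\<dots> = pe R f ([t] \<cdot> a)" by (rule pe_sum[OF ta, symmetric]) (use N in blast)
  finally show ?thesis .
qed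


lemma eval_closed: "(\<And>i. \<sigma> i \<in> carrier R) \<Longrightarrow> eval R \<sigma> p \<in> carrier R"
  by (induction p) (auto simp: mc)

lemma eval_natmul: "(\<And>i. \<sigma> i \<in> carrier R) \<Longrightarrow> eval R \<sigma> (natmul n t) = [n] \<cdot> eval R \<sigma> t"
proof (induction n)
  case 0 then show ?case by simp
next
  case (Suc n)
  then show ?case using eval_closed[of \<sigma> t] by (simp add: a_comm)
qed

lemma eval_intmul: "(\<And>i. \<sigma> i \<in> carrier R) \<Longrightarrow> eval R \<sigma> (intmul k t) = [k] \<cdot> eval R \<sigma> t"
  by (cases "k \<ge> 0") (auto simp: intmul_def eval_natmul add_pow_int_ge add_pow_int_lt)

lemma eval_pw: "eval R \<sigma> (pw t k) = rpw R (eval R \<sigma> t) k"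
  by (induction k) auto

lemma eval_sumt_snoc: "(\<And>i. \<sigma> i \<in> carrier R) \<Longrightarrow> eval R \<sigma> (sumt (xs @ [y])) = eval R \<sigma> (sumt xs) \<oplus> eval R \<sigma> y"
proof (induction xs)
  case Nil then show ?case using eval_closed[of \<sigma> y] by simp
next
  case (Cons x xs)
  then show ?case using eval_closed[of \<sigma>] by (simp add: a_assoc)
qed

lemma eval_sumt_map: "(\<And>i. \<sigma> i \<in> carrier R) \<Longrightarrow> eval R \<sigma> (sumt (map h [0..<n])) = rsum R (\<lambda>i. eval R \<sigma> (h i)) n"
  by (induction n) (auto simp: eval_sumt_snoc)

end

fun lin :: "ncpoly \<Rightarrow> nat \<Rightarrow> int" where
  "lin (Var j) i = (if j = i then 1 else 0)"
| "lin Zero i = 0"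
| "lin (Add p q) i = lin p i + lin q i"
| "lin (Neg p) i = - lin p i"
| "lin (Mul p q) i = 0"

fun vbound :: "ncpoly \<Rightarrow> nat" where
  "vbound (Var j) = Suc j"
| "vbound Zero = 0"
| "vbound (Add p q) = max (vbound p) (vbound q)"
| "vbound (Neg p) = vbound p"
| "vbound (Mul p q) = max (vbound p) (vbound q)"

fun onev :: "ncpoly \<Rightarrow> nat \<Rightarrow> int poly" where
  "onev (Var j) i = (if j = i then 1 else 0)"
| "onev Zero i = 0"
| "onev (Add p q) i = onev p i + onev q i"
| "onev (Neg p) i = - onev p i"
| "onev (Mul p q) i = pCons 0 (onev p i * onev q i)"

lemma coeff_onev: "coeff (onev p i) 0 = lin p i"
  by (induction p) auto

lemma lin_vbound: "vbound p \<le> i \<Longrightarrow> lin p i = 0"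
  by (induction p) auto

context arng begin

lemma eval_onev: assumes a: "a \<in> carrier R"
  shows "eval R (\<lambda>j. if j = i then a else \<zero>) p = pe R (onev p i) a"
  by (induction p) (auto simp: a pe_zero pe_one pe_add pe_uminus pe_mul)

lemma eval_zero_ring:
  assumes zr: "\<And>x y. x \<in> carrier R \<Longrightarrow> y \<in> carrier R \<Longrightarrow> x \<otimes> y = \<zero>"
    and s: "\<And>i. \<sigma> i \<in> carrier R" and K: "vbound p \<le> K"
  shows "eval R \<sigma> p = rsum R (\<lambda>i. [lin p i] \<cdot> \<sigma> i) K"
  using K
proof (induction p)
  case (Var j)
  have "rsum R (\<lambda>i. [lin (Var j) i] \<cdot> \<sigma> i) K = rsum R (\<lambda>i. if i = j then \<sigma> j else \<zero>) K"
    by (rule rsum_cong) (auto simp: s)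
  also have "\<dots> = \<sigma> j" using Var s by (intro rsum_delta) auto
  finally show ?case by simp
next
  case Zero
  have "rsum R (\<lambda>i. [lin Zero i] \<cdot> \<sigma> i) K = rsum R (\<lambda>i. \<zero>) K" by (rule rsum_cong) simp
  also have "\<dots> = \<zero>" by (induction K) auto
  finally show ?case by simp
next
  case (Add p q)
  then have "eval R \<sigma> (Add p q) = rsum R (\<lambda>i. [lin p i] \<cdot> \<sigma> i) K \<oplus> rsum R (\<lambda>i. [lin q i] \<cdot> \<sigma> i) K"
    by simp
  also have "\<dots> = rsum R (\<lambda>i. [lin p i] \<cdot> \<sigma> i \<oplus> [lin q i] \<cdot> \<sigma> i) K"
    by (rule rsum_add[symmetric]) (auto simp: s)
  also have "\<dots> = rsum R (\<lambda>i. [lin (Add p q) i] \<cdot> \<sigma> i) K"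
    by (rule rsum_cong) (simp add: add.int_pow_mult s)
  finally show ?case .
next
  case (Neg p)
  then have "eval R \<sigma> (Neg p) = \<ominus> rsum R (\<lambda>i. [lin p i] \<cdot> \<sigma> i) K" by simp
  also have "\<dots> = [(-1::int)] \<cdot> rsum R (\<lambda>i. [lin p i] \<cdot> \<sigma> i) K"
    using add.int_pow_neg[of _ 1] rsum_closed s by simp
  also have "\<dots> = rsum R (\<lambda>i. [(-1::int)] \<cdot> ([lin p i] \<cdot> \<sigma> i)) K"
    by (rule rsum_zmul[symmetric]) (simp add: s)
  also have "\<dots> = rsum R (\<lambda>i. [lin (Neg p) i] \<cdot> \<sigma> i) K"
    by (rule rsum_cong) (simp add: add.int_pow_pow s)
  finally show ?case .
next
  case (Mul p q)
  have "rsum R (\<lambda>i. [lin (Mul p q) i] \<cdot> \<sigma> i) K = rsum R (\<lambda>i. \<zero>) K" by (rule rsum_cong) simp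
  also have "\<dots> = \<zero>" by (induction K) auto
  finally show ?case using zr eval_closed s by simp
qed

lemma holds_zero_ring:
  assumes zr: "\<And>x y. x \<in> carrier R \<Longrightarrow> y \<in> carrier R \<Longrightarrow> x \<otimes> y = \<zero>"
    and tor: "\<And>x. x \<in> carrier R \<Longrightarrow> [n] \<cdot> x = \<zero>"
    and dv: "\<And>i. (n::int) dvd lin p i"
  shows "holds R p"
  unfolding holds_def
proof (intro allI impI)
  fix \<sigma> :: "nat \<Rightarrow> 'a" assume s: "\<forall>i. \<sigma> i \<in> carrier R"
  have "eval R \<sigma> p = rsum R (\<lambda>i. [lin p i] \<cdot> \<sigma> i) (vbound p)"
    by (rule eval_zero_ring[OF zr]) (use s in auto)
  also have "\<dots> = rsum R (\<lambda>i. \<zero>) (vbound p)"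
  proof (rule rsum_cong)
    fix i
    obtain k where k: "lin p i = n * k" using dv by blast
    have "[lin p i] \<cdot> \<sigma> i = [k] \<cdot> ([n] \<cdot> \<sigma> i)" using s k by (simp add: add.int_pow_pow mult.commute)
    then show "[lin p i] \<cdot> \<sigma> i = \<zero>" using tor s by simp
  qed
  also have "\<dots> = \<zero>" by simp
  finally show "eval R \<sigma> p = \<zero>" .
qed

end



definition ZA :: "nat \<Rightarrow> nat ring" where
  "ZA n = \<lparr>carrier = {..<n}, monoid.mult = (\<lambda>x y. 0), one = 0, zero = 0, add = (\<lambda>x y. (x + y) mod n)\<rparr>"

definition addB :: "nat \<Rightarrow> nat \<Rightarrow> nat \<Rightarrow> nat" where
  "addB p x y = (x mod p + y mod p) mod p + p * ((x div p + y div p) mod p)"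

definition ZB :: "nat \<Rightarrow> nat ring" where
  "ZB p = \<lparr>carrier = {..<p*p}, monoid.mult = (\<lambda>x y. 0), one = 0, zero = 0, add = addB p\<rparr>"

lemma enc_mod: "u < (p::nat) \<Longrightarrow> (u + p * v) mod p = u" by simp
lemma enc_div: "u < (p::nat) \<Longrightarrow> (u + p * v) div p = v" by simp

lemma enc_lt: assumes "u < (p::nat)" "v < p" shows "u + p * v < p * p"
proof -
  have "u + p * v < p + p * v" using assms by simp
  also have "\<dots> = p * (Suc v)" by simp
  also have "\<dots> \<le> p * p" using assms by (intro mult_le_mono2) simp
  finally show ?thesis .
qed

lemma addB_mod: "0 < p \<Longrightarrow> addB p x y mod p = (x mod p + y mod p) mod p"
  unfolding addB_def by (simp add: enc_mod)
lemma addB_div: "0 < p \<Longrightarrow> addB p x y div p = (x div p + y div p) mod p"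
  unfolding addB_def by (simp add: enc_div)

lemma eq_by_mod_div: "(x::nat) mod p = y mod p \<Longrightarrow> x div p = y div p \<Longrightarrow> x = y"
  by (metis div_mult_mod_eq)

lemma div_lt: "x < p * (p::nat) \<Longrightarrow> x div p < p"
  by (simp add: less_mult_imp_div_less)

lemma ZA_ring: assumes n: "0 < n" shows "assoc_ring (ZA n)"
proof -
  have ag: "abelian_group (ZA n)"
  proof (rule abelian_groupI)
    fix x assume x: "x \<in> carrier (ZA n)"
    show "\<exists>y\<in>carrier (ZA n). y \<oplus>\<^bsub>ZA n\<^esub> x = \<zero>\<^bsub>ZA n\<^esub>"
      using x n by (intro bexI[of _ "(n - x) mod n"]) (auto simp: ZA_def mod_add_left_eq)
  qed (auto simp: ZA_def n mod_add_left_eq mod_add_right_eq ac_simps)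
  then show ?thesis unfolding assoc_ring_def by (auto simp: ZA_def)
qed

lemma ZB_ring: assumes p: "0 < p" shows "assoc_ring (ZB p)"
proof -
  have ag: "abelian_group (ZB p)"
  proof (rule abelian_groupI)
    fix x y assume "x \<in> carrier (ZB p)" "y \<in> carrier (ZB p)"
    then show "x \<oplus>\<^bsub>ZB p\<^esub> y \<in> carrier (ZB p)" using p by (auto simp: ZB_def addB_def intro!: enc_lt)
  next
    fix x y z assume "x \<in> carrier (ZB p)" "y \<in> carrier (ZB p)" "z \<in> carrier (ZB p)"
    have "addB p (addB p x y) z = addB p x (addB p y z)"
    proof (rule eq_by_mod_div[where p=p])
      show "addB p (addB p x y) z mod p = addB p x (addB p y z) mod p"
        unfolding addB_mod[OF p] by (simp add: mod_add_left_eq mod_add_right_eq add.assoc)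
      show "addB p (addB p x y) z div p = addB p x (addB p y z) div p"
        unfolding addB_div[OF p] by (simp add: mod_add_left_eq mod_add_right_eq add.assoc)
    qed
    then show "x \<oplus>\<^bsub>ZB p\<^esub> y \<oplus>\<^bsub>ZB p\<^esub> z = x \<oplus>\<^bsub>ZB p\<^esub> (y \<oplus>\<^bsub>ZB p\<^esub> z)"
      by (simp add: ZB_def)
  next
    fix x y assume "x \<in> carrier (ZB p)" "y \<in> carrier (ZB p)"
    show "x \<oplus>\<^bsub>ZB p\<^esub> y = y \<oplus>\<^bsub>ZB p\<^esub> x" by (simp add: ZB_def addB_def add.commute)
  next
    fix x assume x: "x \<in> carrier (ZB p)"
    then have "x div p < p" by (simp add: ZB_def div_lt)
    have "addB p 0 x = x"
      by (rule eq_by_mod_div[where p=p]) (simp_all only: addB_mod[OF p] addB_div[OF p], simp_all add: \<open>x div p < p\<close>)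
    then show "\<zero>\<^bsub>ZB p\<^esub> \<oplus>\<^bsub>ZB p\<^esub> x = x"
      by (simp add: ZB_def)
  next
    fix x assume x: "x \<in> carrier (ZB p)"
    let ?y = "(p - x mod p) mod p + p * ((p - x div p) mod p)"
    have "?y \<in> carrier (ZB p)" using p by (auto simp: ZB_def intro!: enc_lt)
    moreover have "?y \<oplus>\<^bsub>ZB p\<^esub> x = \<zero>\<^bsub>ZB p\<^esub>"
    proof -
      have "x div p < p" using x by (simp add: ZB_def div_lt)
      have "x mod p < p" using p by simp
      have m: "?y mod p = (p - x mod p) mod p" by (rule enc_mod) (use p in simp)
      have d: "?y div p = (p - x div p) mod p" by (rule enc_div) (use p in simp)
      have "addB p ?y x = 0"
      proof (rule eq_by_mod_div[where p=p])
        show "addB p ?y x mod p = 0 mod p" unfolding addB_mod[OF p] m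
          using \<open>x mod p < p\<close> by (simp add: mod_add_left_eq)
        show "addB p ?y x div p = 0 div p" unfolding addB_div[OF p] d
          using \<open>x div p < p\<close> by (simp add: mod_add_left_eq)
      qed
      then show ?thesis by (simp add: ZB_def)
    qed
    ultimately show "\<exists>y\<in>carrier (ZB p). y \<oplus>\<^bsub>ZB p\<^esub> x = \<zero>\<^bsub>ZB p\<^esub>" by blast
  qed (auto simp: ZB_def p)
  then show ?thesis unfolding assoc_ring_def using p by (auto simp: ZB_def addB_def)
qed


context arng begin
lemma natmul_Suc': "x \<in> carrier R \<Longrightarrow> [(Suc k)] \<cdot> x = [k] \<cdot> x \<oplus> x"
  by (simp add: add.nat_pow_Suc)
lemma natmul_0': "[(0::nat)] \<cdot> x = \<zero>"
  by (simp add: add_pow_def)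
end

lemma ZA_arng: "0 < n \<Longrightarrow> arng (ZA n)" by (rule arngI[OF ZA_ring])
lemma ZB_arng: "0 < p \<Longrightarrow> arng (ZB p)" by (rule arngI[OF ZB_ring])

lemma ZA_natmul: assumes n: "0 < n" and x: "x < n" shows "[(k::nat)] \<cdot>\<^bsub>ZA n\<^esub> x = (k * x) mod n"
proof (induction k)
  case 0 then show ?case using arng.natmul_0'[OF ZA_arng[OF n]] by (simp add: ZA_def)
next
  case (Suc k)
  have "[(Suc k)] \<cdot>\<^bsub>ZA n\<^esub> x = [k] \<cdot>\<^bsub>ZA n\<^esub> x \<oplus>\<^bsub>ZA n\<^esub> x"
    by (rule arng.natmul_Suc'[OF ZA_arng[OF n]]) (simp add: ZA_def x)
  also have "\<dots> = (Suc k * x) mod n" using Suc by (simp add: ZA_def mod_add_right_eq add.commute)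
  finally show ?case .
qed

lemma ZB_natmul: assumes p: "0 < p" and x: "x < p * p"
  shows "[(k::nat)] \<cdot>\<^bsub>ZB p\<^esub> x = (k * (x mod p)) mod p + p * ((k * (x div p)) mod p)"
proof (induction k)
  case 0 then show ?case using arng.natmul_0'[OF ZB_arng[OF p]] by (simp add: ZB_def)
next
  case (Suc k)
  have "[(Suc k)] \<cdot>\<^bsub>ZB p\<^esub> x = [k] \<cdot>\<^bsub>ZB p\<^esub> x \<oplus>\<^bsub>ZB p\<^esub> x"
    by (rule arng.natmul_Suc'[OF ZB_arng[OF p]]) (simp add: ZB_def x)
  also have "\<dots> = addB p ((k * (x mod p)) mod p + p * ((k * (x div p)) mod p)) x" using Suc by (simp add: ZB_def)
  also have "\<dots> = (Suc k * (x mod p)) mod p + p * ((Suc k * (x div p)) mod p)"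
    unfolding addB_def using p by (simp add: enc_mod enc_div mod_add_right_eq add.commute)
  finally show ?case .
qed

lemma ZA_zr: "x \<otimes>\<^bsub>ZA n\<^esub> y = \<zero>\<^bsub>ZA n\<^esub>" by (simp add: ZA_def)
lemma ZB_zr: "x \<otimes>\<^bsub>ZB n\<^esub> y = \<zero>\<^bsub>ZB n\<^esub>" by (simp add: ZB_def)

lemma ZA_ZB_graph: "zd_graph_isomorphic (ZA (p*p)) (ZB p)"
proof -
  have v: "zd_vertices (ZA (p*p)) = zd_vertices (ZB p)"
    unfolding zd_vertices_def by (simp add: ZA_def ZB_def)
  have a: "zd_adj (ZA (p*p)) x y = zd_adj (ZB p) x y" for x y
    unfolding zd_adj_def v by (simp add: ZA_def ZB_def)
  show ?thesis unfolding zd_graph_isomorphic_def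
    by (rule exI[of _ id]) (simp add: v a)
qed

lemma ZA_ZB_not_iso: assumes p: "prime p" shows "\<not> rng_isomorphic (ZA (p*p)) (ZB p)"
proof
  assume "rng_isomorphic (ZA (p*p)) (ZB p)"
  then obtain h where bij: "bij_betw h (carrier (ZA (p*p))) (carrier (ZB p))"
    and hom: "\<And>x y. x \<in> carrier (ZA (p*p)) \<Longrightarrow> y \<in> carrier (ZA (p*p)) \<Longrightarrow>
       h (x \<oplus>\<^bsub>ZA (p*p)\<^esub> y) = h x \<oplus>\<^bsub>ZB p\<^esub> h y"
    unfolding rng_isomorphic_def by blast
  have p1: "1 < p" using p prime_gt_1_nat by blast
  then have p0: "0 < p" and pp: "0 < p * p" by auto
  have "p \<le> p * p" using p0 by simp
  then have pp1: "1 < p * p" using p1 by linarith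
  interpret A: arng "ZA (p*p)" by (rule ZA_arng[OF pp])
  interpret B: arng "ZB p" by (rule ZB_arng[OF p0])
  have hc: "h x \<in> carrier (ZB p)" if "x \<in> carrier (ZA (p*p))" for x
    using bij that bij_betwE by blast
  have h0: "h 0 = 0"
  proof -
    have z: "0 \<in> carrier (ZA (p*p))" using pp by (simp add: ZA_def)
    have "h 0 = h 0 \<oplus>\<^bsub>ZB p\<^esub> h 0" using hom[OF z z] by (simp add: ZA_def)
    then have "h 0 = \<zero>\<^bsub>ZB p\<^esub>" using B.add.l_cancel_one[OF hc[OF z] hc[OF z]] by simp
    then show ?thesis by (simp add: ZB_def)
  qed
  have one: "1 \<in> carrier (ZA (p*p))" using pp1 by (simp add: ZA_def)
  have hk: "h ([k] \<cdot>\<^bsub>ZA (p*p)\<^esub> (1::nat)) = [k] \<cdot>\<^bsub>ZB p\<^esub> h 1" for k :: nat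
  proof (induction k)
    case 0 then show ?case using h0 A.natmul_0' B.natmul_0' by (simp add: ZA_def ZB_def)
  next
    case (Suc k)
    have "h ([Suc k] \<cdot>\<^bsub>ZA (p*p)\<^esub> (1::nat)) = h ([k] \<cdot>\<^bsub>ZA (p*p)\<^esub> (1::nat) \<oplus>\<^bsub>ZA (p*p)\<^esub> 1)"
      using A.natmul_Suc'[OF one] by simp
    also have "\<dots> = h ([k] \<cdot>\<^bsub>ZA (p*p)\<^esub> (1::nat)) \<oplus>\<^bsub>ZB p\<^esub> h 1"
      by (rule hom[OF A.add.nat_pow_closed[OF one] one])
    also have "\<dots> = [Suc k] \<cdot>\<^bsub>ZB p\<^esub> h 1" using Suc B.natmul_Suc'[OF hc[OF one]] by simp
    finally show ?case .
  qed
  have "[p] \<cdot>\<^bsub>ZB p\<^esub> h 1 = 0"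
    using ZB_natmul[OF p0, of "h 1" p] hc[OF one] by (simp add: ZB_def)
  moreover have "p < p * p" using p1 by simp
  ultimately have "h p = h 0" using hk[of p] ZA_natmul[OF pp, of 1 p] pp1 h0 by simp
  moreover have "p \<in> carrier (ZA (p*p))" "0 \<in> carrier (ZA (p*p))" using p1 pp by (auto simp: ZA_def)
  ultimately have "p = 0" using bij unfolding bij_betw_def inj_on_def by blast
  then show False using p1 by simp
qed




definition ident :: "ncpoly set \<Rightarrow> int poly \<Rightarrow> bool" where
  "ident \<Sigma> f \<longleftrightarrow> (\<forall>R :: nat ring. in_variety \<Sigma> R \<longrightarrow> (\<forall>a\<in>carrier R. pe R f a = \<zero>\<^bsub>R\<^esub>))"

lemma iv_arng: "in_variety \<Sigma> R \<Longrightarrow> arng R"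
  unfolding in_variety_def by (blast intro: arngI)

lemma ident_zero: "ident \<Sigma> 0"
  unfolding ident_def
proof (intro allI impI ballI)
  fix R :: "nat ring" and a assume R: "in_variety \<Sigma> R" and a: "a \<in> carrier R"
  interpret arng R by (rule iv_arng[OF R])
  show "pe R 0 a = \<zero>\<^bsub>R\<^esub>" by (rule pe_zero)
qed

lemma ident_add: assumes "ident \<Sigma> f" "ident \<Sigma> g" shows "ident \<Sigma> (f + g)"
  unfolding ident_def
proof (intro allI impI ballI)
  fix R :: "nat ring" and a assume R: "in_variety \<Sigma> R" and a: "a \<in> carrier R"
  interpret arng R by (rule iv_arng[OF R])
  show "pe R (f + g) a = \<zero>\<^bsub>R\<^esub>" using assms R a unfolding ident_def by (simp add: pe_add)
qed

lemma ident_smult: assumes "ident \<Sigma> f" shows "ident \<Sigma> (smult c f)"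
  unfolding ident_def
proof (intro allI impI ballI)
  fix R :: "nat ring" and a assume R: "in_variety \<Sigma> R" and a: "a \<in> carrier R"
  interpret arng R by (rule iv_arng[OF R])
  show "pe R (smult c f) a = \<zero>\<^bsub>R\<^esub>" using assms R a unfolding ident_def by (simp add: pe_smult)
qed

lemma ident_uminus: "ident \<Sigma> f \<Longrightarrow> ident \<Sigma> (- f)"
  using ident_smult[of \<Sigma> f "-1"] by simp

lemma ident_scale: assumes "ident \<Sigma> f" shows "ident \<Sigma> (scale t f)"
  unfolding ident_def
proof (intro allI impI ballI)
  fix R :: "nat ring" and a assume R: "in_variety \<Sigma> R" and a: "a \<in> carrier R"
  interpret arng R by (rule iv_arng[OF R])
  show "pe R (scale t f) a = \<zero>\<^bsub>R\<^esub>" using assms R a unfolding ident_def by (simp add: pe_scale)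
qed

lemma ident_onev: assumes "q \<in> \<Sigma>" shows "ident \<Sigma> (onev q i)"
  unfolding ident_def
proof (intro allI impI ballI)
  fix R :: "nat ring" and a assume R: "in_variety \<Sigma> R" and a: "a \<in> carrier R"
  interpret arng R by (rule iv_arng[OF R])
  have "holds R q" using R assms unfolding in_variety_def by blast
  then have "eval R (\<lambda>j. if j = i then a else \<zero>\<^bsub>R\<^esub>) q = \<zero>\<^bsub>R\<^esub>"
    unfolding holds_def using a by auto
  then show "pe R (onev q i) a = \<zero>\<^bsub>R\<^esub>" using eval_onev[OF a] by simp
qed

lemma reduce: "ident \<Sigma> f \<Longrightarrow> \<exists>M. coeff f 0 dvd M \<and> (coeff f 0 \<noteq> 0 \<longrightarrow> M \<noteq> 0) \<and> ident \<Sigma> [:M:]"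
proof (induction "degree f" arbitrary: f rule: less_induct)
  case less
  show ?case
  proof (cases "degree f = 0")
    case True
    then have "f = [:coeff f 0:]" by (metis degree_0_id)
    then show ?thesis using less.prems by (intro exI[of _ "coeff f 0"]) auto
  next
    case False
    define n where "n = degree f"
    define f' where "f' = scale 2 f + - smult (2 ^ Suc n) f"
    have cf': "coeff f' i = coeff f i * (2 ^ Suc i - 2 ^ Suc n)" for i
      unfolding f'_def by (simp add: coeff_scale algebra_simps)
    have "degree f' \<le> n - 1"
    proof (rule degree_le, intro allI impI)
      fix i assume "n - 1 < i"
      then have "i \<ge> n" using False n_def by simp
      then show "coeff f' i = 0"
        by (cases "i = n") (auto simp: cf' n_def coeff_eq_0)
    qed
    then have dlt: "degree f' < degree f" using False n_def by simp
    have idf': "ident \<Sigma> f'" unfolding f'_def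
      by (intro ident_add ident_uminus ident_smult ident_scale less.prems)
    obtain M where M: "coeff f' 0 dvd M" "coeff f' 0 \<noteq> 0 \<longrightarrow> M \<noteq> 0" "ident \<Sigma> [:M:]"
      using less.hyps[OF dlt idf'] by blast
    have "Suc n \<ge> 2" using False n_def by simp
    then have "(2::int) ^ 2 \<le> 2 ^ Suc n" by (intro power_increasing) auto
    moreover have "(2::int) ^ 2 = 4" by simp
    ultimately have nz: "(2::int) - 2 ^ Suc n \<noteq> 0" by linarith
    have "coeff f 0 dvd M" using M(1) cf'[of 0] by (metis dvd_mult_left)
    moreover have "coeff f 0 \<noteq> 0 \<longrightarrow> M \<noteq> 0" using M(2) cf'[of 0] nz by simp
    ultimately show ?thesis using M(3) by blast
  qed
qed

lemma sqfree_prod: assumes "(l::nat) \<noteq> 0" "\<And>p. prime p \<Longrightarrow> \<not> p * p dvd l"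
  shows "l = \<Prod>(prime_factors l)"
proof -
  have "squarefree l" using assms by (subst squarefree_factorial_semiring) (auto simp: power2_eq_square)
  then have m: "\<forall>p\<in>prime_factors l. multiplicity p l = 1"
    using squarefree_factorial_semiring'[OF assms(1)] by blast
  have "l = (\<Prod>p \<in> prime_factors l. p ^ multiplicity p l)" using prod_prime_factors[OF assms(1)] by simp
  also have "\<dots> = \<Prod>(prime_factors l)" using m by (intro prod.cong) auto
  finally show ?thesis .
qed




lemma ZA_iv: assumes p: "prime p" and dv: "\<forall>q\<in>\<Sigma>. \<forall>i. int (p*p) dvd lin q i"
  shows "in_variety \<Sigma> (ZA (p*p))"
proof -
  have p0: "0 < p" using p prime_gt_0_nat by blast
  then have pp: "0 < p * p" by simp
  interpret arng "ZA (p*p)" by (rule ZA_arng[OF pp])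
  have tor: "[int (p*p)] \<cdot>\<^bsub>ZA (p*p)\<^esub> x = \<zero>\<^bsub>ZA (p*p)\<^esub>" if x: "x \<in> carrier (ZA (p*p))" for x
  proof -
    have "[int (p*p)] \<cdot>\<^bsub>ZA (p*p)\<^esub> x = [(p*p)] \<cdot>\<^bsub>ZA (p*p)\<^esub> x" by (metis add_pow_int_ge nat_int of_nat_0_le_iff)
    also have "\<dots> = (p * p * x) mod (p * p)" using x by (intro ZA_natmul[OF pp]) (simp add: ZA_def)
    finally show ?thesis by (simp add: ZA_def)
  qed
  show ?thesis unfolding in_variety_def
    using ZA_ring[OF pp] holds_zero_ring[OF ZA_zr tor] dv by blast
qed

lemma ZB_iv: assumes p: "prime p" and dv: "\<forall>q\<in>\<Sigma>. \<forall>i. int (p*p) dvd lin q i"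
  shows "in_variety \<Sigma> (ZB p)"
proof -
  have p0: "0 < p" using p prime_gt_0_nat by blast
  interpret arng "ZB p" by (rule ZB_arng[OF p0])
  have tor: "[int p] \<cdot>\<^bsub>ZB p\<^esub> x = \<zero>\<^bsub>ZB p\<^esub>" if x: "x \<in> carrier (ZB p)" for x
  proof -
    have "[int p] \<cdot>\<^bsub>ZB p\<^esub> x = [p] \<cdot>\<^bsub>ZB p\<^esub> x" by (metis add_pow_int_ge nat_int of_nat_0_le_iff)
    also have "\<dots> = (p * (x mod p)) mod p + p * ((p * (x div p)) mod p)"
      using x by (intro ZB_natmul[OF p0]) (simp add: ZB_def)
    finally show ?thesis by (simp add: ZB_def)
  qed
  have dv': "\<forall>q\<in>\<Sigma>. \<forall>i. int p dvd lin q i"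
    using dv by (metis dvd_mult_left of_nat_mult)
  show ?thesis unfolding in_variety_def
    using ZB_ring[OF p0] holds_zero_ring[OF ZB_zr tor] dv' by blast
qed

lemma pe_const: assumes "arng R" "a \<in> carrier R" shows "pe R [:M:] a = [M] \<cdot>\<^bsub>R\<^esub> a"
proof -
  interpret arng R by fact
  show ?thesis using assms(2) by (simp add: pe_pCons pe_zero mult_zero_r)
qed

theorem proposition6:
  fixes \<Sigma> :: "ncpoly set"
  assumes "\<forall>(R :: nat ring) (S :: nat ring). in_variety \<Sigma> R \<and> in_variety \<Sigma> S
             \<and> finite (carrier R) \<and> finite (carrier S)
             \<and> zd_graph_isomorphic R S \<longrightarrow> rng_isomorphic R S"
  shows "\<exists>(m::nat) (g::int poly) (d::int). m > 0
           \<and> intmul (int m) X \<in> T_ideal \<Sigma>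
           \<and> Add (intmul d X) (x2_times g) \<in> T_ideal \<Sigma>
           \<and> (d = 1 \<or> (\<exists>Q::nat set. finite Q \<and> Q \<noteq> {} \<and> (\<forall>q\<in>Q. prime q \<and> q dvd m)
                          \<and> d = int (\<Prod>Q)))"
proof -
  define D where "D = {coeff f 0 | f. ident \<Sigma> f}"
  have D0: "0 \<in> D" unfolding D_def using ident_zero by force
  have Dlin: "d1 - k * d2 \<in> D" if dd: "d1 \<in> D" "d2 \<in> D" for d1 d2 k
  proof -
    obtain f1 f2 where f: "ident \<Sigma> f1" "ident \<Sigma> f2" "d1 = coeff f1 0" "d2 = coeff f2 0"
      using dd unfolding D_def by blast
    have "ident \<Sigma> (f1 + - smult k f2)" by (intro ident_add ident_uminus ident_smult f)
    moreover have "coeff (f1 + - smult k f2) 0 = d1 - k * d2" using f by simp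
    ultimately show ?thesis unfolding D_def by force
  qed
  have Dl: "lin q i \<in> D" if "q \<in> \<Sigma>" for q i
    unfolding D_def using ident_onev[OF that, of i] coeff_onev[of q i] by force
  have sq: False if p: "prime p" and dv: "\<forall>d\<in>D. int (p*p) dvd d" for p
  proof -
    have dv2: "\<forall>q\<in>\<Sigma>. \<forall>i. int (p*p) dvd lin q i" using dv Dl by blast
    have p0: "0 < p" using p prime_gt_0_nat by blast
    have "rng_isomorphic (ZA (p*p)) (ZB p)"
      using assms ZA_iv[OF p dv2] ZB_iv[OF p dv2] ZA_ZB_graph[of p]
      by (auto simp: ZA_def ZB_def)
    then show False using ZA_ZB_not_iso[OF p] by blast
  qed
  have "\<exists>d\<in>D. d > 0"
  proof (rule ccontr)
    assume "\<not> (\<exists>d\<in>D. d > 0)"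
    have "\<forall>d\<in>D. d = 0"
    proof
      fix d assume d: "d \<in> D"
      have "0 - 1 * d \<in> D" by (rule Dlin[OF D0 d])
      then have "- d \<in> D" by simp
      then have "\<not> - d > 0" "\<not> d > 0" using d \<open>\<not> (\<exists>d\<in>D. d > 0)\<close> by blast+
      then show "d = 0" by linarith
    qed
    then have "\<forall>d\<in>D. int (2*2) dvd d" by auto
    then show False using sq[of 2] by simp
  qed
  then have ex: "\<exists>n::nat. 0 < n \<and> int n \<in> D" by (metis zero_less_imp_eq_int)
  define l where "l = (LEAST n::nat. 0 < n \<and> int n \<in> D)"
  have l: "0 < l" "int l \<in> D" using LeastI_ex[OF ex] unfolding l_def by auto
  have ldv: "int l dvd d" if "d \<in> D" for d
  proof (rule ccontr)
    assume nd: "\<not> int l dvd d"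
    have "d - (d div int l) * int l \<in> D" by (rule Dlin[OF that l(2)])
    moreover have "d - (d div int l) * int l = d mod int l" by (simp add: minus_div_mult_eq_mod)
    ultimately have md: "d mod int l \<in> D" by simp
    have pos: "d mod int l > 0" using nd l(1)
      by (metis dvd_eq_mod_eq_0 le_less of_nat_0_less_iff pos_mod_sign)
    have lt: "d mod int l < int l" using l(1) by simp
    have "0 < nat (d mod int l) \<and> int (nat (d mod int l)) \<in> D" using pos md by simp
    then have "l \<le> nat (d mod int l)" unfolding l_def by (rule Least_le)
    then show False using lt pos by linarith
  qed
  have lsq: "\<not> p * p dvd l" if "prime p" for p
  proof
    assume "p * p dvd l"
    then have "\<forall>d\<in>D. int (p*p) dvd d" using ldv by (metis dvd_trans of_nat_dvd_iff)
    then show False using sq that by blast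
  qed
  have "\<exists>f. ident \<Sigma> f \<and> coeff f 0 = int l" using l(2) unfolding D_def by auto
  then obtain f where f: "ident \<Sigma> f" "coeff f 0 = int l" by blast
  obtain M where M: "int l dvd M" "M \<noteq> 0" "ident \<Sigma> [:M:]" using reduce[OF f(1)] f(2) l(1) by auto
  define m where "m = nat \<bar>M\<bar>"
  obtain g where fg: "f = pCons (int l) g" using f(2) by (metis coeff_pCons_0 pCons_cases)
  have m0: "m > 0" using M(2) m_def by simp
  have T1: "intmul (int m) X \<in> T_ideal \<Sigma>"
    unfolding T_ideal_def holds_def
  proof (intro CollectI allI impI)
    fix R :: "nat ring" and \<sigma> :: "nat \<Rightarrow> nat" assume R: "in_variety \<Sigma> R" and s: "\<forall>i. \<sigma> i \<in> carrier R"
    interpret arng R by (rule iv_arng[OF R])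
    have a: "\<sigma> 0 \<in> carrier R" using s by simp
    have "pe R [:M:] (\<sigma> 0) = \<zero>\<^bsub>R\<^esub>" using M(3) R a unfolding ident_def by blast
    then have Ma: "[M] \<cdot>\<^bsub>R\<^esub> \<sigma> 0 = \<zero>\<^bsub>R\<^esub>" using pe_const[OF iv_arng[OF R] a] by simp
    have "[int m] \<cdot>\<^bsub>R\<^esub> \<sigma> 0 = \<zero>\<^bsub>R\<^esub>"
    proof (cases "M \<ge> 0")
      case True then show ?thesis using Ma m_def by simp
    next
      case False
      then have "int m = - M" using m_def by simp
      then show ?thesis using Ma add.int_pow_neg[OF a, of M] by simp
    qed
    then show "eval R \<sigma> (intmul (int m) X) = \<zero>\<^bsub>R\<^esub>" using s by (simp add: eval_intmul)
  qed
  have T2: "Add (intmul (int l) X) (x2_times g) \<in> T_ideal \<Sigma>"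
    unfolding T_ideal_def holds_def
  proof (intro CollectI allI impI)
    fix R :: "nat ring" and \<sigma> :: "nat \<Rightarrow> nat" assume R: "in_variety \<Sigma> R" and s: "\<forall>i. \<sigma> i \<in> carrier R"
    interpret arng R by (rule iv_arng[OF R])
    have s': "\<And>i. \<sigma> i \<in> carrier R" using s by simp
    have a: "\<sigma> 0 \<in> carrier R" using s by simp
    have "eval R \<sigma> (x2_times g) = rsum R (\<lambda>i. eval R \<sigma> (intmul (coeff g i) (pw X (Suc i)))) (Suc (degree g))"
      unfolding x2_times_def by (rule eval_sumt_map[OF s'])
    also have "\<dots> = rsum R (\<lambda>i. \<sigma> 0 \<otimes>\<^bsub>R\<^esub> ([coeff g i] \<cdot>\<^bsub>R\<^esub> rpw R (\<sigma> 0) i)) (Suc (degree g))"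
      by (rule rsum_cong) (simp add: eval_intmul[OF s'] eval_pw zmul_r rpw_closed a)
    also have "\<dots> = \<sigma> 0 \<otimes>\<^bsub>R\<^esub> pe R g (\<sigma> 0)"
      unfolding pe_def by (rule rsum_lmult[symmetric]) (simp_all add: rpw_closed a)
    finally have "eval R \<sigma> (Add (intmul (int l) X) (x2_times g)) = pe R f (\<sigma> 0)"
      using fg by (simp add: eval_intmul[OF s'] pe_pCons a)
    then show "eval R \<sigma> (Add (intmul (int l) X) (x2_times g)) = \<zero>\<^bsub>R\<^esub>"
      using f(1) R a unfolding ident_def by simp
  qed
  have dc: "int l = 1 \<or> (\<exists>Q::nat set. finite Q \<and> Q \<noteq> {} \<and> (\<forall>q\<in>Q. prime q \<and> q dvd m) \<and> int l = int (\<Prod>Q))"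
  proof (cases "l = 1")
    case True then show ?thesis by simp
  next
    case False
    have l1: "l > 1" using False l(1) by simp
    have ne: "prime_factors l \<noteq> {}"
      using l1 by (auto simp: prime_factorization_empty_iff)
    have "\<forall>q\<in>prime_factors l. prime q \<and> q dvd m"
    proof
      fix q assume q: "q \<in> prime_factors l"
      then have "q dvd l" "prime q" by auto
      have "int q dvd int l" using \<open>q dvd l\<close> by simp
      then have "int q dvd M" using M(1) dvd_trans by blast
      then have "int q dvd \<bar>M\<bar>" by simp
      moreover have "int m = \<bar>M\<bar>" unfolding m_def by simp
      ultimately have "q dvd m" by (metis of_nat_dvd_iff)
      then show "prime q \<and> q dvd m" using \<open>prime q\<close> by simp
    qed
    moreover have "l = \<Prod>(prime_factors l)" using sqfree_prod l(1) lsq by simp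
    ultimately show ?thesis using ne by (intro disjI2 exI[of _ "prime_factors l"]) auto
  qed
  show ?thesis using m0 T1 T2 dc by blast
qed


end
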